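(* With $d_k$ as defined below, for every $0\le k\le q-1$, $$d_k=-(-1)^{k+\lfloor k/p\rfloor}\,k!\binom{q/p-1}{\lfloor k/p\rfloor}.$$
   Context: $\mathbf{F}_q$ has characteristic $p$. $M(k,b,D)$ denotes the number of ordered $k$-tuples of pairwise distinct elements of $D\subseteq\mathbf{F}_q$ with sum $b$. $d_0=-1$ and $d_k=M(k,1,\mathbf{F}_q^* )-M(k,0,\mathbf{F}_q^* )$ for $k\ge1$. Binomial coefficients $\binom{x}{m}=x(x-1)\cdots(x-m+1)/m!$ for real $x$, integer $m\ge0$. *)

theory Defs
  imports "HOL-Analysis.Analysis"
begin

definition M :: "nat \<Rightarrow> 'a::{finite,field} \<Rightarrow> 'a set \<Rightarrow> nat" where
  "M k b D = card {xs. length xs = k \<and> distinct xs \<and> set xs \<subseteq> D \<and> sum_list xs = b}"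

definition d :: "'a::{finite,field} itself \<Rightarrow> nat \<Rightarrow> int" where
  "d _ k = (if k = 0 then -1
            else int (M k (1::'a) (UNIV - {0})) - int (M k (0::'a) (UNIV - {0})))"

end

theory Submission
  imports Defs "HOL-Combinatorics.Multiset_Permutations"
begin


lemma sl_distinct: "distinct xs \<Longrightarrow> sum_list xs = sum id (set xs)"
  using sum_list_distinct_conv_sum_set[of xs id] by simp

definition A :: "nat \<Rightarrow> 'a::{finite,field} \<Rightarrow> 'a set \<Rightarrow> nat" where
  "A k b D = card {S. S \<subseteq> D \<and> card S = k \<and> sum id S = b}"

lemma M_eq_A:
  fixes b :: "'a::{finite,field}"
  shows "M k b D = fact k * A k b D"
proof -
  let ?F = "{S. S \<subseteq> D \<and> card S = k \<and> sum id S = b}"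
  have eq: "{xs. length xs = k \<and> distinct xs \<and> set xs \<subseteq> D \<and> sum_list xs = b}
      = (\<Union>S\<in>?F. permutations_of_set S)"
  proof (rule set_eqI, rule iffI)
    fix xs assume "xs \<in> {xs. length xs = k \<and> distinct xs \<and> set xs \<subseteq> D \<and> sum_list xs = b}"
    then show "xs \<in> (\<Union>S\<in>?F. permutations_of_set S)"
      by (auto simp: permutations_of_set_def distinct_card sl_distinct intro!: bexI[of _ "set xs"])
  next
    fix xs assume "xs \<in> (\<Union>S\<in>?F. permutations_of_set S)"
    then show "xs \<in> {xs. length xs = k \<and> distinct xs \<and> set xs \<subseteq> D \<and> sum_list xs = b}"
      by (auto simp: permutations_of_set_def distinct_card sl_distinct)
  qed
  have "card (\<Union>S\<in>?F. permutations_of_set S) = (\<Sum>S\<in>?F. card (permutations_of_set S))"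
    proof (rule card_UN_disjoint)
    show "finite ?F" by simp
    show "\<forall>i\<in>?F. finite (permutations_of_set i)" by simp
    show "\<forall>i\<in>?F. \<forall>j\<in>?F. i \<noteq> j \<longrightarrow> permutations_of_set i \<inter> permutations_of_set j = {}"
      by (auto simp: permutations_of_set_def)
  qed
  also have "\<dots> = (\<Sum>S\<in>?F. fact k)"
    by (rule sum.cong) auto
  also have "\<dots> = fact k * A k b D" by (simp add: A_def)
  finally show ?thesis unfolding M_def eq .
qed

lemma A_0: "A 0 c (D::'a::{finite,field} set) = (if c = 0 then 1 else 0)"
proof -
  have "{S. S \<subseteq> D \<and> card S = 0 \<and> sum id S = c} = (if c = 0 then {{}} else {})"
    by auto
  then show ?thesis by (simp add: A_def)
qed

lemma A_with:
  fixes x :: "'a::{finite,field}"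
  assumes "x \<in> D"
  shows "card {S. S \<subseteq> D \<and> card S = Suc k \<and> sum id S = c \<and> x \<in> S} = A k (c - x) (D - {x})"
proof -
  have "bij_betw (\<lambda>S. S - {x}) {S. S \<subseteq> D \<and> card S = Suc k \<and> sum id S = c \<and> x \<in> S}
      {S. S \<subseteq> D - {x} \<and> card S = k \<and> sum id S = c - x}"
  proof (rule bij_betw_byWitness[where f' = "insert x"])
    show "\<forall>a\<in>{S. S \<subseteq> D \<and> card S = Suc k \<and> sum id S = c \<and> x \<in> S}. insert x (a - {x}) = a" by auto
    show "\<forall>a'\<in>{S. S \<subseteq> D - {x} \<and> card S = k \<and> sum id S = c - x}. insert x a' - {x} = a'" by auto
    show "(\<lambda>S. S - {x}) ` {S. S \<subseteq> D \<and> card S = Suc k \<and> sum id S = c \<and> x \<in> S}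
        \<subseteq> {S. S \<subseteq> D - {x} \<and> card S = k \<and> sum id S = c - x}"
      by (auto simp: sum_diff1 card_Diff_singleton)
    show "insert x ` {S. S \<subseteq> D - {x} \<and> card S = k \<and> sum id S = c - x}
        \<subseteq> {S. S \<subseteq> D \<and> card S = Suc k \<and> sum id S = c \<and> x \<in> S}"
      using assms by (auto simp: card_insert_if sum.insert_if)
  qed
  then show ?thesis unfolding A_def by (rule bij_betw_same_card)
qed

lemma A_split:
  fixes x :: "'a::{finite,field}"
  assumes "x \<in> D"
  shows "A (Suc k) c D = A (Suc k) c (D - {x}) + A k (c - x) (D - {x})"
proof -
  have "{S. S \<subseteq> D \<and> card S = Suc k \<and> sum id S = c} =
     {S. S \<subseteq> D - {x} \<and> card S = Suc k \<and> sum id S = c} \<union> {S. S \<subseteq> D \<and> card S = Suc k \<and> sum id S = c \<and> x \<in> S}"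
    by auto
  then have "A (Suc k) c D = card ({S. S \<subseteq> D - {x} \<and> card S = Suc k \<and> sum id S = c} \<union> {S. S \<subseteq> D \<and> card S = Suc k \<and> sum id S = c \<and> x \<in> S})"
    by (simp add: A_def)
  also have "\<dots> = A (Suc k) c (D - {x}) + card {S. S \<subseteq> D \<and> card S = Suc k \<and> sum id S = c \<and> x \<in> S}"
    unfolding A_def by (rule card_Un_disjoint) auto
  finally show ?thesis using A_with[OF assms] by simp
qed

lemma A_double:
  fixes b :: "'a::{finite,field}"
  shows "Suc k * A (Suc k) b D = (\<Sum>x\<in>D. A k (b - x) (D - {x}))"
proof -
  let ?F = "{S. S \<subseteq> D \<and> card S = Suc k \<and> sum id S = b}"
  have "(\<Sum>x\<in>D. A k (b - x) (D - {x})) = (\<Sum>x\<in>D. card {S\<in>?F. x \<in> S})"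
  proof (rule sum.cong)
    fix x assume "x \<in> D"
    have "{S\<in>?F. x \<in> S} = {S. S \<subseteq> D \<and> card S = Suc k \<and> sum id S = b \<and> x \<in> S}" by auto
    then show "A k (b - x) (D - {x}) = card {S\<in>?F. x \<in> S}" using A_with[OF \<open>x \<in> D\<close>] by simp
  qed simp
  also have "\<dots> = (\<Sum>x\<in>D. \<Sum>S\<in>?F. if x \<in> S then 1 else 0)"
  proof (rule sum.cong)
    fix x
    show "card {S\<in>?F. x \<in> S} = (\<Sum>S\<in>?F. if x \<in> S then 1 else 0)"
      using sum.inter_filter[of ?F "\<lambda>_. 1::nat" "\<lambda>S. x\<in>S"] by simp
  qed simp
  also have "\<dots> = (\<Sum>S\<in>?F. \<Sum>x\<in>D. if x \<in> S then 1 else 0)"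
    by (rule sum.swap)
  also have "\<dots> = (\<Sum>S\<in>?F. Suc k)"
  proof (rule sum.cong)
    fix S assume "S \<in> ?F"
    then have "D \<inter> S = S" by auto
    with \<open>S \<in> ?F\<close> show "(\<Sum>x\<in>D. if x \<in> S then 1 else 0) = Suc k"
      by (simp add: sum.If_cases)
  qed simp
  also have "\<dots> = Suc k * A (Suc k) b D" by (simp add: A_def)
  finally show ?thesis by simp
qed



lemma A_unroll:
  fixes x :: "'a::{finite,field}"
  assumes "x \<in> D"
  shows "int (A r c (D - {x})) = (\<Sum>j\<le>r. (-1)^j * int (A (r - j) (c - of_nat j * x) D))"
proof (induction r arbitrary: c)
  case 0
  then show ?case by (simp add: A_0)
next
  case (Suc r)
  have "int (A (Suc r) c (D - {x})) = int (A (Suc r) c D) - int (A r (c - x) (D - {x}))"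
    using A_split[OF assms, of r c] by simp
  also have "\<dots> = int (A (Suc r) c D) - (\<Sum>j\<le>r. (-1)^j * int (A (r - j) (c - x - of_nat j * x) D))"
    using Suc by simp
  also have "\<dots> = (\<Sum>j\<le>Suc r. (-1)^j * int (A (Suc r - j) (c - of_nat j * x) D))"
  proof -
    have "(\<Sum>j\<le>Suc r. (-1)^j * int (A (Suc r - j) (c - of_nat j * x) D))
       = int (A (Suc r) c D) + (\<Sum>j\<le>r. (-1)^(Suc j) * int (A (Suc r - Suc j) (c - of_nat (Suc j) * x) D))"
      by (subst sum.atMost_Suc_shift) simp
    also have "\<dots> = int (A (Suc r) c D) - (\<Sum>j\<le>r. (-1)^j * int (A (r - j) (c - x - of_nat j * x) D))"
    proof -
      have "(\<Sum>j\<le>r. (-1)^(Suc j) * int (A (Suc r - Suc j) (c - of_nat (Suc j) * x) D))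
          = (\<Sum>j\<le>r. - ((-1)^j * int (A (r - j) (c - x - of_nat j * x) D)))"
      proof (rule sum.cong)
        fix j
        have eq: "c - of_nat (Suc j) * x = c - x - of_nat j * x" by (simp add: algebra_simps)
        show "(-1)^(Suc j) * int (A (Suc r - Suc j) (c - of_nat (Suc j) * x) D)
          = - ((-1)^j * int (A (r - j) (c - x - of_nat j * x) D))" by (subst eq) simp
      qed simp
      then show ?thesis by (simp add: sum_negf)
    qed
    finally show ?thesis by simp
  qed
  finally show ?case .
qed

lemma sum_scaled:
  fixes f :: "'a::{finite,field} \<Rightarrow> int" and s b :: 'a
  shows "(\<Sum>x\<in>UNIV - {0}. f (b - s * x)) =
     (if s = 0 then (int CARD('a) - 1) * f b else (\<Sum>c\<in>UNIV. f c) - f b)"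
proof (cases "s = 0")
  case True
  then show ?thesis by (simp add: card_Diff_singleton)
next
  case False
  have bij: "bij_betw (\<lambda>x. b - s * x) (UNIV - {0}) (UNIV - {b})"
  proof (rule bij_betw_byWitness[where f' = "\<lambda>y. (b - y) / s"])
    show "\<forall>a\<in>UNIV - {0}. (b - (b - s * a)) / s = a" using False by auto
    show "\<forall>a'\<in>UNIV - {b}. b - s * ((b - a') / s) = a'" using False by auto
    show "(\<lambda>x. b - s * x) ` (UNIV - {0}) \<subseteq> UNIV - {b}" using False by auto
    show "(\<lambda>y. (b - y) / s) ` (UNIV - {b}) \<subseteq> UNIV - {0}" using False by auto
  qed
  have "(\<Sum>x\<in>UNIV - {0}. f (b - s * x)) = (\<Sum>c\<in>UNIV - {b}. f c)"
    using sum.reindex_bij_betw[OF bij, of f] by simp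
  also have "\<dots> = (\<Sum>c\<in>UNIV. f c) - f b"
    by (simp add: sum_diff1)
  finally show ?thesis using False by simp
qed

definition e :: "'a::{finite,field} itself \<Rightarrow> nat \<Rightarrow> int" where
  "e _ k = int (A k (1::'a) (UNIV - {0})) - int (A k (0::'a) (UNIV - {0}))"

definition cc :: "'a::{finite,field} itself \<Rightarrow> nat \<Rightarrow> int" where
  "cc _ s = (if of_nat s = (0::'a) then int CARD('a) - 1 else -1)"

lemma A_rec:
  fixes b :: "'a::{finite,field}"
  defines "D \<equiv> UNIV - {0::'a}"
  shows "int (Suc k) * int (A (Suc k) b D) =
    (\<Sum>j\<le>k. (-1)^j * (\<Sum>x\<in>D. int (A (k - j) (b - of_nat (Suc j) * x) D)))"
proof -
  have "int (Suc k) * int (A (Suc k) b D) = int (Suc k * A (Suc k) b D)" by (simp only: of_nat_mult)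
  also have "\<dots> = (\<Sum>x\<in>D. int (A k (b - x) (D - {x})))"
    by (simp only: A_double of_nat_sum)
  also have "\<dots> = (\<Sum>x\<in>D. \<Sum>j\<le>k. (-1)^j * int (A (k - j) (b - x - of_nat j * x) D))"
    by (rule sum.cong) (simp_all add: A_unroll)
  also have "\<dots> = (\<Sum>j\<le>k. \<Sum>x\<in>D. (-1)^j * int (A (k - j) (b - of_nat (Suc j) * x) D))"
  proof (subst sum.swap, rule sum.cong)
    fix j
    show "(\<Sum>x\<in>D. (-1)^j * int (A (k - j) (b - x - of_nat j * x) D)) = (\<Sum>x\<in>D. (-1)^j * int (A (k - j) (b - of_nat (Suc j) * x) D))"
    proof (rule sum.cong)
      fix x :: 'a
      have eq: "b - x - of_nat j * x = b - of_nat (Suc j) * x" by (simp add: algebra_simps)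
      show "(-1)^j * int (A (k - j) (b - x - of_nat j * x) D) = (-1)^j * int (A (k - j) (b - of_nat (Suc j) * x) D)" by (subst eq) (rule refl)
    qed simp
  qed simp
  also have "\<dots> = (\<Sum>j\<le>k. (-1)^j * (\<Sum>x\<in>D. int (A (k - j) (b - of_nat (Suc j) * x) D)))"
    by (simp add: sum_distrib_left)
  finally show ?thesis .
qed

lemma e_rec:
  "int (Suc k) * e TYPE('a::{finite,field}) (Suc k) =
    (\<Sum>j\<le>k. (-1)^j * cc TYPE('a) (Suc j) * e TYPE('a) (k - j))"
proof -
  let ?D = "UNIV - {0::'a}"
  have "int (Suc k) * e TYPE('a) (Suc k) = int (Suc k) * int (A (Suc k) (1::'a) ?D) - int (Suc k) * int (A (Suc k) (0::'a) ?D)"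
    by (simp add: e_def right_diff_distrib)
  also have "\<dots> = (\<Sum>j\<le>k. (-1)^j * (\<Sum>x\<in>?D. int (A (k - j) (1 - of_nat (Suc j) * x) ?D))
      - (-1)^j * (\<Sum>x\<in>?D. int (A (k - j) (0 - of_nat (Suc j) * x) ?D)))"
    unfolding A_rec by (rule sum_subtractf[symmetric])
  also have "\<dots> = (\<Sum>j\<le>k. (-1)^j * cc TYPE('a) (Suc j) * e TYPE('a) (k - j))"
  proof (rule sum.cong)
    fix j assume "j \<in> {..k}"
    define g where "g = (\<lambda>c. int (A (k - j) c ?D))"
    define s where "s = (of_nat (Suc j) :: 'a)"
    have h1: "(\<Sum>x\<in>?D. g (1 - s * x)) = (if s = 0 then (int CARD('a) - 1) * g 1 else (\<Sum>c\<in>UNIV. g c) - g 1)"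
      by (rule sum_scaled)
    have h0: "(\<Sum>x\<in>?D. g (0 - s * x)) = (if s = 0 then (int CARD('a) - 1) * g 0 else (\<Sum>c\<in>UNIV. g c) - g 0)"
      by (rule sum_scaled)
    have ce: "cc TYPE('a) (Suc j) = (if s = 0 then int CARD('a) - 1 else -1)" by (simp add: cc_def s_def)
    have ee: "e TYPE('a) (k - j) = g 1 - g 0" by (simp add: e_def g_def)
    have "(\<Sum>x\<in>?D. g (1 - s * x)) - (\<Sum>x\<in>?D. g (0 - s * x)) = cc TYPE('a) (Suc j) * e TYPE('a) (k - j)"
      unfolding h1 h0 ce ee by (simp add: algebra_simps)
    then show "(-1)^j * (\<Sum>x\<in>?D. int (A (k - j) (1 - of_nat (Suc j) * x) ?D))
      - (-1)^j * (\<Sum>x\<in>?D. int (A (k - j) (0 - of_nat (Suc j) * x) ?D)) = (-1)^j * cc TYPE('a) (Suc j) * e TYPE('a) (k - j)"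
      unfolding g_def s_def by (simp only: right_diff_distrib[symmetric] mult.assoc)
  qed simp
  finally show ?thesis .
qed



lemma hS_identity:
  fixes a :: real
  shows "- (real Mq * (- ((-1)^Mq * (a gchoose Mq)))) = a * (\<Sum>t<Mq. - ((-1)^t * (a gchoose t)))"
proof (cases Mq)
  case 0
  then show ?thesis by simp
next
  case (Suc N)
  have "(\<Sum>t<Mq. - ((-1)^t * (a gchoose t))) = - (\<Sum>t\<le>N. (a gchoose t) * (-1)^t)"
    using Suc by (simp add: lessThan_Suc_atMost sum_negf mult.commute)
  also have "\<dots> = - ((-1)^N * (a - 1 gchoose N))"
    by (simp add: gbinomial_sum_lower_neg)
  finally have S: "(\<Sum>t<Mq. - ((-1)^t * (a gchoose t))) = - ((-1)^N * (a - 1 gchoose N))" .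
  have ab: "of_nat (Suc N) * (a gchoose Suc N) = a * ((a - 1) gchoose N)"
    by (rule gbinomial_absorption)
  have E: "real Mq * (a gchoose Mq) = a * ((a - 1) gchoose N)" using ab Suc by simp
  have "- (real Mq * (- ((-1)^Mq * (a gchoose Mq)))) = - ((-1)^N * (real Mq * (a gchoose Mq)))"
    using Suc by simp
  also have "\<dots> = - ((-1)^N * (a * ((a - 1) gchoose N)))" by (simp only: E)
  also have "\<dots> = a * (- ((-1)^N * (a - 1 gchoose N)))" by (simp add: algebra_simps)
  finally show ?thesis unfolding S .
qed

lemma U_formula:
  fixes h :: "nat \<Rightarrow> real"
  assumes p: "p > 0"
  shows "(\<Sum>i<n. h (i div p)) = real p * (\<Sum>t<n div p. h t) + real (n mod p) * h (n div p)"
proof (induction n)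
  case 0
  then show ?case by simp
next
  case (Suc n)
  show ?case
  proof (cases "Suc (n mod p) = p")
    case True
    then have d: "Suc n div p = Suc (n div p)" and m: "Suc n mod p = 0"
      using p by (auto simp: div_Suc mod_Suc)
    have "(\<Sum>i<Suc n. h (i div p)) = real p * (\<Sum>t<n div p. h t) + real (n mod p) * h (n div p) + h (n div p)"
      using Suc by simp
    also have "\<dots> = real p * (\<Sum>t<n div p. h t) + real p * h (n div p)"
    proof -
      have e: "real p = real (n mod p) + 1" using True by (metis of_nat_Suc add.commute)
      show ?thesis unfolding e by (simp add: algebra_simps)
    qed
    also have "\<dots> = real p * (\<Sum>t<Suc n div p. h t) + real (Suc n mod p) * h (Suc n div p)"
      using d m by (simp add: algebra_simps)
    finally show ?thesis .
  next
    case False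
    then have d: "Suc n div p = n div p" and m: "Suc n mod p = Suc (n mod p)"
      using p by (auto simp: div_Suc mod_Suc)
    show ?thesis using Suc d m by (simp add: algebra_simps)
  qed
qed

lemma filtered_sum:
  fixes H :: "nat \<Rightarrow> real"
  assumes p: "p > 0"
  shows "(\<Sum>j\<in>{j\<in>{..k}. p dvd Suc j}. H ((k - j) div p)) = (\<Sum>t<Suc k div p. H t)"
proof -
  define n where "n = Suc k"
  define Mq where "Mq = n div p"
  define r where "r = n mod p"
  have nMr: "n = Mq * p + r" unfolding Mq_def r_def by simp
  have rp: "r < p" unfolding r_def using p by simp
  show ?thesis
  proof (rule sum.reindex_bij_witness[where i = "\<lambda>t. (Mq - t) * p - 1" and j = "\<lambda>j. Mq - Suc j div p"])
    fix t assume t: "t \<in> {..<Suc k div p}"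
    then have tM: "t < Mq" unfolding Mq_def n_def by simp
    then have pos: "(Mq - t) * p \<ge> 1" using p by simp
    have "Suc ((Mq - t) * p - 1) = (Mq - t) * p" using pos by arith
    then show "Mq - Suc ((Mq - t) * p - 1) div p = t" using p tM by simp
    show "(Mq - t) * p - 1 \<in> {j \<in> {..k}. p dvd Suc j}"
    proof -
      have "(Mq - t) * p \<le> Mq * p" by simp
      also have "\<dots> \<le> n" using nMr by simp
      finally have "(Mq - t) * p - 1 \<le> k" unfolding n_def by simp
      moreover have "p dvd Suc ((Mq - t) * p - 1)" using \<open>Suc ((Mq - t) * p - 1) = (Mq - t) * p\<close> by simp
      ultimately show ?thesis by simp
    qed
  next
    fix j assume j: "j \<in> {j \<in> {..k}. p dvd Suc j}"
    then have "p dvd Suc j" by simp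
    then obtain m where m: "Suc j = m * p" by (metis dvdE mult.commute)
    have m1: "m \<ge> 1" using m by (cases m) auto
    have "m * p \<le> n" using j m unfolding n_def by simp
    then have mM: "m \<le> Mq" unfolding Mq_def using p
      by (metis div_le_mono nonzero_mult_div_cancel_right not_gr0)
    have sj: "Suc j div p = m" using m p by simp
    show "(Mq - (Mq - Suc j div p)) * p - 1 = j" using sj mM m by simp
    show "Mq - Suc j div p \<in> {..<Suc k div p}" using sj m1 mM unfolding Mq_def n_def by simp
    have "k - j = n - m * p" using m unfolding n_def by simp
    also have "\<dots> = (Mq - m) * p + r"
    proof -
      have "Mq * p = (Mq - m) * p + m * p" using mM by (simp add: add_mult_distrib[symmetric])
      then show ?thesis using nMr by simp
    qed
    finally have "(k - j) div p = Mq - m" using rp p by simp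
    then show "H (Mq - Suc j div p) = H ((k - j) div p)" using sj by simp
  qed
qed

lemma F_rec:
  fixes a q :: real and p :: nat
  assumes p: "p > 0" and q: "q = real p * (a + 1)"
  defines "h \<equiv> \<lambda>m. - ((-1)^m * (a gchoose m))"
  defines "F \<equiv> \<lambda>i. (-1)^i * h (i div p)"
  defines "c \<equiv> \<lambda>s. if p dvd s then q - 1 else (-1::real)"
  shows "real (Suc k) * F (Suc k) = (\<Sum>j\<le>k. (-1)^j * c (Suc j) * F (k - j))"
proof -
  define H where "H = (\<lambda>i. h (i div p))"
  define n where "n = Suc k"
  define Mq where "Mq = n div p"
  define r where "r = n mod p"
  define S where "S = (\<Sum>t<Mq. h t)"
  have nMr: "real n = real Mq * real p + real r"
    unfolding Mq_def r_def by (metis div_mult_mod_eq of_nat_add of_nat_mult)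
  have step1: "(\<Sum>j\<le>k. (-1)^j * c (Suc j) * F (k - j)) = (-1)^k * (\<Sum>j\<le>k. c (Suc j) * H (k - j))"
    unfolding sum_distrib_left
  proof (rule sum.cong)
    fix j assume "j \<in> {..k}"
    then have "(-1::real)^j * (-1)^(k - j) = (-1)^k" by (simp flip: power_add)
    then show "(-1)^j * c (Suc j) * F (k - j) = (-1)^k * (c (Suc j) * H (k - j))"
      unfolding F_def H_def by (metis (no_types, lifting) mult.assoc mult.left_commute)
  qed simp
  have step2: "(\<Sum>j\<le>k. c (Suc j) * H (k - j)) = - (\<Sum>j\<le>k. H (k - j)) + q * (\<Sum>j\<in>{j\<in>{..k}. p dvd Suc j}. H (k - j))"
  proof -
    have "(\<Sum>j\<le>k. c (Suc j) * H (k - j)) = (\<Sum>j\<le>k. - H (k - j) + (if p dvd Suc j then q * H (k - j) else 0))"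
      by (rule sum.cong) (auto simp: c_def algebra_simps)
    also have "\<dots> = - (\<Sum>j\<le>k. H (k - j)) + (\<Sum>j\<le>k. if p dvd Suc j then q * H (k - j) else 0)"
      by (simp add: sum.distrib sum_negf sum_subtractf)
    also have "(\<Sum>j\<le>k. if p dvd Suc j then q * H (k - j) else 0) = (\<Sum>j\<in>{j\<in>{..k}. p dvd Suc j}. q * H (k - j))"
      by (rule sum.inter_filter[symmetric]) simp
    finally show ?thesis by (simp add: sum_distrib_left)
  qed
  have rev: "(\<Sum>j\<le>k. H (k - j)) = (\<Sum>i<n. H i)"
  proof -
    have "(\<Sum>j\<le>k. H (k - j)) = (\<Sum>i\<le>k. H i)"
      by (rule sum.reindex_bij_witness[where i="\<lambda>i. k - i" and j="\<lambda>i. k - i"]) auto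
    then show ?thesis unfolding n_def by (simp add: lessThan_Suc_atMost)
  qed
  have U: "(\<Sum>i<n. H i) = real p * S + real r * h Mq"
    unfolding H_def S_def Mq_def r_def by (rule U_formula[OF p])
  have filt: "(\<Sum>j\<in>{j\<in>{..k}. p dvd Suc j}. H (k - j)) = S"
    unfolding H_def S_def Mq_def n_def by (rule filtered_sum[OF p])
  have key: "- (real Mq * h Mq) = a * S"
    unfolding h_def S_def by (rule hS_identity)
  have LHS: "real (Suc k) * F (Suc k) = (-1)^k * (- (real n * h Mq))"
    unfolding F_def n_def Mq_def by simp
  have "- (real n * h Mq) = - (real p * S + real r * h Mq) + q * S"
  proof -
    have "- (real n * h Mq) = real p * (- (real Mq * h Mq)) - real r * h Mq"
      unfolding nMr by (simp add: algebra_simps)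
    also have "\<dots> = real p * (a * S) - real r * h Mq" by (simp only: key)
    also have "\<dots> = - (real p * S + real r * h Mq) + q * S" unfolding q by (simp add: algebra_simps)
    finally show ?thesis .
  qed
  then show ?thesis unfolding LHS step1 step2 rev U filt by simp
qed


lemma e_closed:
  fixes k :: nat
  defines "p \<equiv> CHAR('a::{finite,field})"
  defines "a \<equiv> real CARD('a) / real p - 1"
  defines "h \<equiv> \<lambda>m. - ((-1)^m * (a gchoose m))"
  defines "F \<equiv> \<lambda>i. (-1)^i * h (i div p)"
  shows "real_of_int (e TYPE('a) k) = F k"
proof (induction k rule: nat_less_induct)
  case (1 n)
  have p: "p > 0" unfolding p_def by (rule finite_imp_CHAR_pos) simp
  define q where "q = real CARD('a)"
  have q: "q = real p * (a + 1)" unfolding q_def a_def using p by simp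
  define c where "c = (\<lambda>s. if p dvd s then q - 1 else (-1::real))"
  have cc: "real_of_int (cc TYPE('a) s) = c s" for s
    unfolding cc_def c_def q_def p_def by (simp add: of_nat_eq_0_iff_char_dvd)
  show ?case
  proof (cases n)
    case 0
    have "e TYPE('a) 0 = -1" by (simp add: e_def A_0)
    then show ?thesis using 0 by (simp add: F_def h_def)
  next
    case (Suc k)
    have IH: "real_of_int (e TYPE('a) (k - j)) = F (k - j)" for j
      using 1 Suc by simp
    have "real (Suc k) * real_of_int (e TYPE('a) (Suc k)) = real_of_int (int (Suc k) * e TYPE('a) (Suc k))"
      by simp
    also have "\<dots> = real_of_int (\<Sum>j\<le>k. (-1)^j * cc TYPE('a) (Suc j) * e TYPE('a) (k - j))"
      by (simp only: e_rec)
    also have "\<dots> = (\<Sum>j\<le>k. (-1)^j * c (Suc j) * F (k - j))"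
      by (simp add: cc IH)
    also have "\<dots> = real (Suc k) * F (Suc k)"
      unfolding F_def h_def c_def by (rule F_rec[OF p q, symmetric])
    finally show ?thesis using Suc by simp
  qed
qed

lemma d_eq_e: "d TYPE('a::{finite,field}) k = fact k * e TYPE('a) k"
proof (cases "k = 0")
  case True
  then show ?thesis by (simp add: d_def e_def A_0)
next
  case False
  then show ?thesis by (simp add: d_def e_def M_eq_A algebra_simps)
qed

theorem corollary2p5:
  fixes k :: nat
  assumes "k \<le> CARD('a::{finite,field}) - 1"
  shows "real_of_int (d TYPE('a) k) =
    - ((-1) ^ (k + k div CHAR('a)) * fact k *
       ((real CARD('a) / real CHAR('a) - 1) gchoose (k div CHAR('a))))"
proof -
  have "real_of_int (d TYPE('a) k) = fact k * real_of_int (e TYPE('a) k)"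
    by (simp add: d_eq_e)
  also have "\<dots> = fact k * ((-1)^k * (- ((-1)^(k div CHAR('a)) * ((real CARD('a) / real CHAR('a) - 1) gchoose (k div CHAR('a))))))"
    by (simp only: e_closed)
  also have "\<dots> = - ((-1) ^ (k + k div CHAR('a)) * fact k *
       ((real CARD('a) / real CHAR('a) - 1) gchoose (k div CHAR('a))))"
    by (simp add: power_add algebra_simps)
  finally show ?thesis .
qed

end
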